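(* Let $\Bbbk$ be a field, let $M$ be an $n\times m$ integer matrix of rank $m$, and let $I(M)=\langle x^{\mu_+}-x^{\mu_-}\mid \mu \text{ a column of } M\rangle\subseteq\Bbbk[x_1,\dots,x_n]$. Let $\tau\subseteq\{1,\dots,n\}$ and $P=\mathbb{N}^\tau\times\mathbb{Z}^{\bar\tau}$. Then $u,v\in P$ are connected in $\mathscr{G}_P(\Bbbk[P]\cdot I(M))$ if and only if they are connected in $G_P(M)$.
   Context: For $\mu\in\mathbb{Z}^n$, $(\mu_+)_k=\max(\mu_k,0)$ and $(\mu_-)_k=\max(-\mu_k,0)$. $\bar\tau=\{1,\dots,n\}\setminus\tau$; $P=\mathbb{N}^\tau\times\mathbb{Z}^{\bar\tau}=\{u\in\mathbb{Z}^n\mid u_i\ge 0 \text{ for } i\in\tau\}$, with monoid ring $\Bbbk[P]=\Bbbk[x_j^{\pm1}\mid j\notin\tau][x_i\mid i\in\tau]$. For $Q\subseteq\mathbb{Z}^n$, the graph $G_Q(M)$ has vertex set $Q$, with $u,v$ adjacent iff $u-v$ or $v-u$ is a column of $M$. For a binomial ideal $I\subseteq\Bbbk[P]$, the graph $\mathscr{G}_P(I)$ has vertex set $P$ and an edge between $u,v\in P$ iff $x^u-\rho x^v\in I$ for some nonzero $\rho\in\Bbbk$. *)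

theory Defs
  imports "HOL-Analysis.Analysis" "HOL-Library.Poly_Mapping"
begin

text \<open>Elements of k[Z^n] are finitely supported maps (poly_mapping) with the
 convolution product of Poly_Mapping; x^u is  Poly_Mapping.single u 1.\<close>

definition pos_part :: "int^'n \<Rightarrow> int^'n" where
  "pos_part \<mu> = (\<chi> i. max (\<mu> $ i) 0)"

definition neg_part :: "int^'n \<Rightarrow> int^'n" where
  "neg_part \<mu> = (\<chi> i. max (- (\<mu> $ i)) 0)"

text \<open>P = N^tau x Z^(complement of tau)\<close>
definition Pset :: "'n set \<Rightarrow> (int^'n) set" where
  "Pset \<tau> = {u. \<forall>i\<in>\<tau>. 0 \<le> u $ i}"

text \<open>The monoid ring k[P] as a subset of k[Z^n]\<close>
definition kP :: "'n set \<Rightarrow> ((int^'n) \<Rightarrow>\<^sub>0 'k::field) set" where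
  "kP \<tau> = {f. Poly_Mapping.keys f \<subseteq> Pset \<tau>}"

definition monom :: "int^'n \<Rightarrow> 'k::field \<Rightarrow> (int^'n) \<Rightarrow>\<^sub>0 'k" where
  "monom u c = Poly_Mapping.single u c"

definition binom_gen :: "int^'n \<Rightarrow> (int^'n) \<Rightarrow>\<^sub>0 'k::field" where
  "binom_gen \<mu> = monom (pos_part \<mu>) 1 - monom (neg_part \<mu>) 1"

text \<open>The ideal k[P] . I(M) of k[P], generated by the binomials of the columns of M
 (M has n rows indexed by 'n and m columns indexed by 'm).\<close>
definition extended_ideal :: "'n set \<Rightarrow> int^'m^'n \<Rightarrow> ((int^'n) \<Rightarrow>\<^sub>0 'k::field) set" where
  "extended_ideal \<tau> M =
     {f. \<exists>g. (\<forall>j. g j \<in> kP \<tau>) \<and> f = (\<Sum>j\<in>UNIV. g j * binom_gen (column j M))}"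

definition binom_graph_edge :: "'n set \<Rightarrow> ((int^'n) \<Rightarrow>\<^sub>0 'k::field) set \<Rightarrow> int^'n \<Rightarrow> int^'n \<Rightarrow> bool" where
  "binom_graph_edge \<tau> I u v \<longleftrightarrow> u \<in> Pset \<tau> \<and> v \<in> Pset \<tau> \<and>
     (\<exists>\<rho>. \<rho> \<noteq> 0 \<and> monom u 1 - monom v \<rho> \<in> I)"

definition lattice_graph_edge :: "'n set \<Rightarrow> int^'m^'n \<Rightarrow> int^'n \<Rightarrow> int^'n \<Rightarrow> bool" where
  "lattice_graph_edge \<tau> M u v \<longleftrightarrow> u \<in> Pset \<tau> \<and> v \<in> Pset \<tau> \<and>
     (\<exists>j. u - v = column j M \<or> v - u = column j M)"

end

theory Submission
  imports Defs
begin

lemma pm_decomp: "(g::'a \<Rightarrow>\<^sub>0 'b::comm_monoid_add) = (\<Sum>w\<in>Poly_Mapping.keys g. Poly_Mapping.single w (Poly_Mapping.lookup g w))"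
proof (rule poly_mapping_eqI)
  fix k
  show "Poly_Mapping.lookup g k = Poly_Mapping.lookup (\<Sum>w\<in>Poly_Mapping.keys g. Poly_Mapping.single w (Poly_Mapping.lookup g w)) k"
    by (auto simp: lookup_sum lookup_single when_def in_keys_iff)
qed

definition phi :: "'a set \<Rightarrow> ('a \<Rightarrow>\<^sub>0 'k::field) \<Rightarrow> 'k" where
  "phi C h = (\<Sum>w\<in>C \<inter> Poly_Mapping.keys h. Poly_Mapping.lookup h w)"

lemma phi_alt: "finite S \<Longrightarrow> Poly_Mapping.keys h \<subseteq> S \<Longrightarrow> phi C h = (\<Sum>w\<in>C \<inter> S. Poly_Mapping.lookup h w)"
  unfolding phi_def by (rule sum.mono_neutral_left) (auto simp: in_keys_iff)

lemma phi_add: "phi C (a + b) = phi C a + phi C b"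
proof -
  have f: "finite (Poly_Mapping.keys a \<union> Poly_Mapping.keys b)" by simp
  have s: "Poly_Mapping.keys (a+b) \<subseteq> Poly_Mapping.keys a \<union> Poly_Mapping.keys b" by (rule keys_add)
  show ?thesis
    using phi_alt[OF f s, of C] phi_alt[OF f, of a C] phi_alt[OF f, of b C]
    by (simp add: lookup_add sum.distrib)
qed

lemma phi_uminus: "phi C (- a) = - phi C a"
  by (simp add: phi_def sum_negf)

lemma phi_diff: "phi C (a - b) = phi C a - phi C b"
  by (metis diff_conv_add_uminus phi_add phi_uminus)

lemma phi_zero: "phi C 0 = 0"
  by (simp add: phi_def)

lemma phi_sum: "phi C (\<Sum>i\<in>I. f i) = (\<Sum>i\<in>I. phi C (f i))"
  by (induction I rule: infinite_finite_induct) (simp_all add: phi_add phi_zero)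

lemma phi_single: "phi C (Poly_Mapping.single w c) = (if w \<in> C then c else 0)"
  by (auto simp: phi_def)

lemma pos_neg: "pos_part \<mu> - neg_part \<mu> = \<mu>"
  by (simp add: pos_part_def neg_part_def vec_eq_iff max_def)

lemma lat_sym: "lattice_graph_edge \<tau> M a b \<Longrightarrow> lattice_graph_edge \<tau> M b a"
  unfolding lattice_graph_edge_def by blast

lemma pos_P: "w \<in> Pset \<tau> \<Longrightarrow> w + pos_part \<mu> \<in> Pset \<tau>"
  by (auto simp: Pset_def pos_part_def)
lemma neg_P: "w \<in> Pset \<tau> \<Longrightarrow> w + neg_part \<mu> \<in> Pset \<tau>"
  by (auto simp: Pset_def neg_part_def)

lemma phi_ideal:
  fixes M :: "int^'m^'n" and u :: "int^'n" and \<tau> :: "'n set"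
  defines "C \<equiv> {z. (lattice_graph_edge \<tau> M)\<^sup>*\<^sup>* u z}"
  assumes "f \<in> (extended_ideal \<tau> M :: ((int^'n) \<Rightarrow>\<^sub>0 'k::field) set)"
  shows "phi C f = 0"
proof -
  have closed: "a \<in> C \<longleftrightarrow> b \<in> C" if "lattice_graph_edge \<tau> M a b" for a b
    using that lat_sym[OF that] unfolding C_def
    by (auto intro: rtranclp.rtrancl_into_rtrancl)
  have gen: "phi C (g * binom_gen (column j M)) = 0" if g: "g \<in> kP \<tau>" for g :: "(int^'n) \<Rightarrow>\<^sub>0 'k" and j
  proof -
    let ?\<mu> = "column j M"
    have term0: "phi C (Poly_Mapping.single w (Poly_Mapping.lookup g w) * binom_gen ?\<mu>) = 0" if w: "w \<in> Poly_Mapping.keys g" for w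
    proof -
      have wP: "w \<in> Pset \<tau>" using g w by (auto simp: kP_def)
      have e: "lattice_graph_edge \<tau> M (w + pos_part ?\<mu>) (w + neg_part ?\<mu>)"
        unfolding lattice_graph_edge_def using pos_P[OF wP] neg_P[OF wP] pos_neg[of ?\<mu>]
        by (metis add_diff_cancel_left)
      show ?thesis
        using closed[OF e]
        by (simp add: binom_gen_def monom_def right_diff_distrib mult_single phi_diff phi_single)
    qed
    have "g * binom_gen ?\<mu> = (\<Sum>w\<in>Poly_Mapping.keys g. Poly_Mapping.single w (Poly_Mapping.lookup g w) * binom_gen ?\<mu>)"
      by (subst pm_decomp[of g]) (simp add: sum_distrib_right)
    then show ?thesis using term0 by (simp add: phi_sum)
  qed
  from assms(2) obtain g where g: "\<forall>j. g j \<in> kP \<tau>"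
    and f: "f = (\<Sum>j\<in>UNIV. g j * binom_gen (column j M))"
    unfolding extended_ideal_def by blast
  show ?thesis using gen g by (simp add: f phi_sum)
qed

lemma binom_to_lat:
  fixes M :: "int^'m^'n"
  assumes "binom_graph_edge \<tau> (extended_ideal \<tau> M :: ((int^'n) \<Rightarrow>\<^sub>0 'k::field) set) u v"
  shows "(lattice_graph_edge \<tau> M)\<^sup>*\<^sup>* u v"
proof (rule ccontr)
  assume nv: "\<not> ?thesis"
  define C where "C = {z. (lattice_graph_edge \<tau> M)\<^sup>*\<^sup>* u z}"
  from assms obtain \<rho> :: 'k where "\<rho> \<noteq> 0" and mem: "monom u 1 - monom v \<rho> \<in> extended_ideal \<tau> M"
    unfolding binom_graph_edge_def by blast
  have "phi C (monom u 1 - monom v \<rho>) = 0"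
    using phi_ideal[OF mem] unfolding C_def by simp
  moreover have "u \<in> C" "v \<notin> C" using nv by (auto simp: C_def)
  ultimately show False by (simp add: monom_def phi_diff phi_single)
qed

lemma lat_to_binom:
  fixes M :: "int^'m^'n"
  assumes "lattice_graph_edge \<tau> M u v"
  shows "binom_graph_edge \<tau> (extended_ideal \<tau> M :: ((int^'n) \<Rightarrow>\<^sub>0 'k::field) set) u v"
proof -
  from assms have uP: "u \<in> Pset \<tau>" and vP: "v \<in> Pset \<tau>"
    and j: "\<exists>j. u - v = column j M \<or> v - u = column j M"
    unfolding lattice_graph_edge_def by auto
  from j obtain j where j: "u - v = column j M \<or> v - u = column j M" by blast
  have key: "\<exists>c::'k. \<exists>w. w \<in> Pset \<tau> \<and> monom u 1 - monom v 1 = Poly_Mapping.single w c * binom_gen (column j M)"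
  proof (cases "u - v = column j M")
    case True
    let ?\<mu> = "column j M"
    define w where "w = u - pos_part ?\<mu>"
    have w1: "w + pos_part ?\<mu> = u" by (simp add: w_def)
    have w2: "w + neg_part ?\<mu> = v" using True pos_neg[of ?\<mu>] unfolding w_def
      by (metis add.commute diff_add_eq_diff_diff_swap diff_add_cancel diff_diff_eq2)
    have d: "\<And>i. column j M $ i = u$i - v$i" by (metis True vector_minus_component)
    have wP: "w \<in> Pset \<tau>" using uP vP unfolding w_def Pset_def pos_part_def
      by (auto simp: d max_def)
    show ?thesis
      by (rule exI[of _ 1], rule exI[of _ w])
        (simp add: wP binom_gen_def monom_def right_diff_distrib mult_single w1 w2)
  next
    case False
    then have T: "v - u = column j M" using j by blast
    let ?\<mu> = "column j M"
    define w where "w = v - pos_part ?\<mu>"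
    have w1: "w + pos_part ?\<mu> = v" by (simp add: w_def)
    have w2: "w + neg_part ?\<mu> = u" using T pos_neg[of ?\<mu>] unfolding w_def
      by (metis add.commute diff_add_eq_diff_diff_swap diff_add_cancel diff_diff_eq2)
    have d: "\<And>i. column j M $ i = v$i - u$i" by (metis T vector_minus_component)
    have wP: "w \<in> Pset \<tau>" using uP vP unfolding w_def Pset_def pos_part_def
      by (auto simp: d max_def)
    show ?thesis
      by (rule exI[of _ "-1"], rule exI[of _ w])
        (simp add: wP binom_gen_def monom_def right_diff_distrib mult_single w1 w2 single_uminus)
  qed
  then obtain c :: 'k and w where wP: "w \<in> Pset \<tau>"
    and eq: "monom u 1 - monom v 1 = Poly_Mapping.single w c * binom_gen (column j M)" by blast
  define g where "g = (\<lambda>j'. if j' = j then Poly_Mapping.single w c else 0)"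
  have "g j' \<in> kP \<tau>" for j' using wP by (auto simp: g_def kP_def)
  moreover have "monom u 1 - monom v 1 = (\<Sum>j'\<in>UNIV. g j' * binom_gen (column j' M))"
  proof -
    have "(\<Sum>j'\<in>UNIV. g j' * binom_gen (column j' M)) = (\<Sum>j'\<in>UNIV. if j' = j then Poly_Mapping.single w c * binom_gen (column j' M) else 0)"
      by (rule sum.cong) (auto simp: g_def)
    then show ?thesis by (simp add: eq)
  qed
  ultimately have "monom u 1 - monom v (1::'k) \<in> extended_ideal \<tau> M"
    unfolding extended_ideal_def by blast
  then show ?thesis unfolding binom_graph_edge_def using uP vP by (metis one_neq_zero)
qed

theorem lemma2p12:
  fixes M :: "int^'m^'n" and \<tau> :: "'n set" and u v :: "int^'n"
  assumes "rank (map_matrix real_of_int M) = CARD('m)"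
    and "u \<in> Pset \<tau>" and "v \<in> Pset \<tau>"
  shows "(binom_graph_edge \<tau> (extended_ideal \<tau> M :: ((int^'n) \<Rightarrow>\<^sub>0 'k::field) set))\<^sup>*\<^sup>* u v
         \<longleftrightarrow> (lattice_graph_edge \<tau> M)\<^sup>*\<^sup>* u v"
proof
  assume "(binom_graph_edge \<tau> (extended_ideal \<tau> M :: ((int^'n) \<Rightarrow>\<^sub>0 'k::field) set))\<^sup>*\<^sup>* u v"
  then show "(lattice_graph_edge \<tau> M)\<^sup>*\<^sup>* u v"
  proof (induction rule: rtranclp_induct)
    case base then show ?case by simp
  next
    case (step y z)
    then show ?case using binom_to_lat[OF step(2)] by (meson rtranclp_trans)
  qed
next
  assume "(lattice_graph_edge \<tau> M)\<^sup>*\<^sup>* u v"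
  then show "(binom_graph_edge \<tau> (extended_ideal \<tau> M :: ((int^'n) \<Rightarrow>\<^sub>0 'k::field) set))\<^sup>*\<^sup>* u v"
  proof (induction rule: rtranclp_induct)
    case base then show ?case by simp
  next
    case (step y z)
    then show ?case using lat_to_binom[OF step(2)]
      by (meson rtranclp.rtrancl_into_rtrancl)
  qed
qed

end
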